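(* Let $(A,E)$ be a $B$-valued Banach noncommutative probability space, $a\in A$, $N\in\mathbb N$, and fix $i\in I$ in the Fock space setting below. Then there exist $\alpha_n\in\mathcal B_n(B)$, $n=0,1,\ldots,N$, such that with $X=L_i+\sum_{n=0}^NV_{i,n}(\alpha_n)\in\mathcal B(\mathcal F)$ one has $\mathcal E(b_0Xb_1X\cdots b_kX)=E(b_0ab_1a\cdots b_ka)$ for all $k\in\{1,\ldots,N\}$ and all $b_0,\ldots,b_k\in B$ (with $b_j$ acting as $\lambda(b_j)$).
   Context: A $B$-valued Banach noncommutative probability space is a pair $(A,E)$ where $A$ is a unital Banach algebra containing an isometric copy of the unital complex Banach algebra $B$ as a unital subalgebra and $E:A\to B$ is a bounded projection with $E(b_1ab_2)=b_1E(a)b_2$. Fock space setting: $I$ a set, $\mathbb N=\{1,2,\ldots\}$; $D=\ell^1(I,B)$ (functions $d:I\to B$ with $\sum_i\|d(i)\|<\infty$, left action $(bd)(i)=b\,d(i)$, $\delta_i$ the function $1$ at $i$, $0$ elsewhere); $\mathcal F=B\Omega\oplus\bigoplus_{k\ge1}D^{\hat\otimes k}\hat\otimes B$ ($\ell^1$-sum of projective tensor products, $\Omega$ the unit of the copy $B\Omega$ of $B$); $\lambda(b)$: $b_0\Omega\mapsto(bb_0)\Omega$, $d_1\otimes\cdots\otimes d_k\otimes b_0\mapsto(bd_1)\otimes\cdots\otimes d_k\otimes b_0$; $P$ the projection onto $B\Omega$ killing other summands, $\mathcal E(X)=P(X\Omega)$; $L_i$: $b_0\Omega\mapsto\delta_i\otimes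 b_0$, $d_1\otimes\cdots\otimes b_0\mapsto\delta_i\otimes d_1\otimes\cdots\otimes b_0$. $\mathcal B_n(B)$ = bounded multilinear maps $B^n\to B$, $\mathcal B_0(B)=B$. For $n\ge1$, $V_{i,n}(\alpha_n)$ vanishes on $B\Omega$ and on $d_1\otimes\cdots\otimes d_k\otimes b_0$ with $k<n$, sends it to $\alpha_n(d_1(i),\ldots,d_n(i))b_0\Omega$ if $k=n$, and to $\alpha_n(d_1(i),\ldots,d_n(i))d_{n+1}\otimes\cdots\otimes d_k\otimes b_0$ if $k>n$. $V_{i,0}(\alpha_0)=\lambda(\alpha_0)$. *)

theory Defs
  imports "HOL-Analysis.Analysis"
begin

text \<open>A complex unital Banach
algebra is modelled as a real unital Banach algebra (type class) together with a
map cs from the complex numbers into it, complex scalar multiplication being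
c . x = cs c * x.\<close>

definition complex_structure :: "(complex \<Rightarrow> 'b::{real_normed_algebra_1,banach}) \<Rightarrow> bool" where
  "complex_structure cs \<longleftrightarrow>
     (\<forall>c d. cs (c + d) = cs c + cs d) \<and>
     (\<forall>c d. cs (c * d) = cs c * cs d) \<and>
     (\<forall>r. cs (complex_of_real r) = of_real r) \<and>
     (\<forall>c x. cs c * x = x * cs c) \<and>
     (\<forall>c x. norm (cs c * x) = cmod c * norm x)"

text \<open>A contains an isometric copy of B as a unital subalgebra via the isometric unital
algebra embedding iota : B \<rightarrow> A (complex linear, i.e. compatible with the complex
structures: the complex structure of A is iota \<circ> cs).\<close>

definition banach_ncps ::
  "(complex \<Rightarrow> 'b::{real_normed_algebra_1,banach}) \<Rightarrow> ('b \<Rightarrow> 'a::{real_normed_algebra_1,banach})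
    \<Rightarrow> ('a \<Rightarrow> 'b) \<Rightarrow> bool" where
  "banach_ncps cs iota E \<longleftrightarrow>
     complex_structure cs \<and>
     complex_structure (iota \<circ> cs) \<and>
     (\<forall>x y. iota (x + y) = iota x + iota y) \<and>
     (\<forall>r x. iota (scaleR r x) = scaleR r (iota x)) \<and>
     (\<forall>x y. iota (x * y) = iota x * iota y) \<and>
     iota 1 = 1 \<and>
     (\<forall>x. norm (iota x) = norm x) \<and>
     bounded_linear E \<and>
     (\<forall>b. E (iota b) = b) \<and>
     (\<forall>b1 a b2. E (iota b1 * a * iota b2) = b1 * E a * b2)"

text \<open>An element of B_n(B) is represented by a function on lists, of which only the
values on lists of length n matter.  For n = 0 it is just the element alpha [] of B.\<close>

definition bounded_multilinear_n ::
  "(complex \<Rightarrow> 'b::{real_normed_algebra_1,banach}) \<Rightarrow> nat \<Rightarrow> ('b list \<Rightarrow> 'b) \<Rightarrow> bool" where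
  "bounded_multilinear_n cs n alpha \<longleftrightarrow>
     (\<forall>xs ys x y. length xs + length ys + 1 = n \<longrightarrow>
        alpha (xs @ (x + y) # ys) = alpha (xs @ x # ys) + alpha (xs @ y # ys)) \<and>
     (\<forall>xs ys c x. length xs + length ys + 1 = n \<longrightarrow>
        alpha (xs @ (cs c * x) # ys) = cs c * alpha (xs @ x # ys)) \<and>
     (\<exists>K. \<forall>xs. length xs = n \<longrightarrow> norm (alpha xs) \<le> K * (\<Prod>x\<leftarrow>xs. norm x))"

definition ell1 :: "('i \<Rightarrow> 'b::real_normed_vector) set" where
  "ell1 = {d. (\<lambda>i. norm (d i)) summable_on UNIV}"

definition delta :: "'i \<Rightarrow> 'i \<Rightarrow> 'b::{zero,one}" where
  "delta i = (\<lambda>j. if j = i then 1 else 0)"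

text \<open>An elementary tensor d_1 \<otimes> ... \<otimes> d_k \<otimes> b_0 is the pair ([d_1,...,d_k], b_0);
the pair ([], b_0) stands for b_0 \<Omega>.  A vector is a formal finite sum (list) of
elementary tensors.  Operators are given by their (linear extension of their) action
on elementary tensors.\<close>

type_synonym ('i,'b) etensor = "('i \<Rightarrow> 'b) list \<times> 'b"
type_synonym ('i,'b) fvec = "('i,'b) etensor list"
type_synonym ('i,'b) fop = "('i,'b) etensor \<Rightarrow> ('i,'b) fvec"

definition apply_op :: "('i,'b) fop \<Rightarrow> ('i,'b) fvec \<Rightarrow> ('i,'b) fvec" where
  "apply_op T v = concat (map T v)"

definition Omega :: "('i,'b::one) fvec" where
  "Omega = [([], 1)]"

fun lam :: "'b::times \<Rightarrow> ('i,'b) fop" where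
  "lam b ([], b0) = [([], b * b0)]"
| "lam b (d # ds, b0) = [((\<lambda>j. b * d j) # ds, b0)]"

definition Lop :: "'i \<Rightarrow> ('i,'b::{zero,one}) fop" where
  "Lop i e = [(delta i # fst e, snd e)]"

text \<open>V_{i,n}(alpha_n); for n = 0 this is lambda(alpha_0) with alpha_0 = alpha [].\<close>
definition Vop :: "'i \<Rightarrow> nat \<Rightarrow> ('b::times list \<Rightarrow> 'b) \<Rightarrow> ('i,'b) fop" where
  "Vop i n alpha e =
     (let ds = fst e; b0 = snd e; c = alpha (map (\<lambda>d. d i) (take n ds)) in
      if length ds < n then []
      else if length ds = n then [([], c * b0)]
      else [((\<lambda>j. c * (ds ! n) j) # drop (Suc n) ds, b0)])"

definition Xop :: "'i \<Rightarrow> nat \<Rightarrow> (nat \<Rightarrow> 'b::{zero,one,times} list \<Rightarrow> 'b) \<Rightarrow> ('i,'b) fop" where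
  "Xop i N alpha e = Lop i e @ concat (map (\<lambda>n. Vop i n (alpha n) e) [0..<Suc N])"

text \<open>P: projection onto B\<Omega> (returns the B-coefficient); \<E>(Y) = P(Y \<Omega>).\<close>
definition Pproj :: "('i,'b::monoid_add) fvec \<Rightarrow> 'b" where
  "Pproj v = sum_list (map (\<lambda>e. if fst e = [] then snd e else 0) v)"

definition fock_word :: "('i,'b::times) fop \<Rightarrow> 'b list \<Rightarrow> ('i,'b) fvec \<Rightarrow> ('i,'b) fvec" where
  "fock_word X bs v = foldr (\<lambda>b w. apply_op (lam b) (apply_op X w)) bs v"

definition fock_moment :: "('i,'b::{monoid_add,one,times}) fop \<Rightarrow> 'b list \<Rightarrow> 'b" where
  "fock_moment X bs = Pproj (fock_word X bs Omega)"

definition alg_word :: "('b \<Rightarrow> 'a::monoid_mult) \<Rightarrow> 'a \<Rightarrow> 'b list \<Rightarrow> 'a" where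
  "alg_word iota a bs = foldr (\<lambda>b y. iota b * a * y) bs 1"

end

theory Submission
  imports Defs
begin


primrec Fm :: "(nat \<Rightarrow> 'b list \<Rightarrow> 'b) \<Rightarrow> nat \<Rightarrow> 'b::ring_1 list \<Rightarrow> 'b list \<Rightarrow> 'b" where
  "Fm al N [] gs = (if gs = [] then 1 else 0)"
| "Fm al N (b # rs) gs = Fm al N rs (b # gs) +
     (\<Sum>n\<le>N. if length gs < n then 0
             else if length gs = n then Fm al N rs [] * (b * al n gs)
             else Fm al N rs ((b * (al n (take n gs) * gs ! n)) # drop (Suc n) gs))"

lemma apply_op_append: "apply_op T (xs @ ys) = apply_op T xs @ apply_op T ys"
  by (simp add: apply_op_def)

lemma apply_op_concat: "apply_op T (concat xss) = concat (map (apply_op T) xss)"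
  by (induct xss) (simp_all add: apply_op_def)

lemma sum_list_map_concat: "sum_list (map h (concat xss)) = sum_list (map (\<lambda>xs. sum_list (map h xs)) xss)"
  by (induct xss) simp_all

lemma sum_list_upto_N: "sum_list (map f [0..<Suc N]) = (\<Sum>n\<le>N. f n)"
  by (simp add: sum_set_upt_conv_sum_list_nat[symmetric] atLeast0LessThan lessThan_Suc_atMost del: upt_Suc)

lemma step_V:
  "sum_list (map (\<lambda>e. Fm al N rs (map (\<lambda>d. d i) (fst e)) * snd e) (apply_op (lam b) (Vop i n (al n) (ds, c))))
   = (if length ds < n then 0
      else if length ds = n then Fm al N rs [] * (b * al n (map (\<lambda>d. d i) ds))
      else Fm al N rs ((b * (al n (take n (map (\<lambda>d. d i) ds)) * (map (\<lambda>d. d i) ds) ! n)) # drop (Suc n) (map (\<lambda>d. d i) ds))) * c"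
  by (auto simp: Vop_def Let_def apply_op_def take_map drop_map mult.assoc)

lemma step_corr:
  "sum_list (map (\<lambda>e. Fm al N rs (map (\<lambda>d. d i) (fst e)) * snd e) (apply_op (lam b) (Xop i N al (ds, c))))
   = Fm al N (b # rs) (map (\<lambda>d. d i) ds) * c"
proof -
  have "apply_op (lam b) (Xop i N al (ds, c)) = apply_op (lam b) (Lop i (ds, c)) @
      concat (map (\<lambda>n. apply_op (lam b) (Vop i n (al n) (ds, c))) [0..<Suc N])"
    by (simp add: Xop_def apply_op_append apply_op_concat o_def del: upt_Suc)
  moreover have "apply_op (lam b) (Lop i (ds, c)) = [((\<lambda>j. b * delta i j) # ds, c)]"
    by (simp add: Lop_def apply_op_def)
  ultimately show ?thesis
    by (simp add: sum_list_map_concat step_V sum_list_upto_N delta_def o_def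
        sum_distrib_right distrib_right del: upt_Suc cong: if_cong)
qed

lemma corr:
  "Pproj (fock_word (Xop i N al) bs v) =
     sum_list (map (\<lambda>e. Fm al N (rev bs) (map (\<lambda>d. d i) (fst e)) * snd e) v)"
proof (induct bs arbitrary: v rule: rev_induct)
  case Nil
  show ?case by (induct v) (auto simp: fock_word_def Pproj_def)
next
  case (snoc b bs)
  have "fock_word (Xop i N al) (bs @ [b]) v = fock_word (Xop i N al) bs (apply_op (lam b) (apply_op (Xop i N al) v))"
    by (simp add: fock_word_def)
  also have "apply_op (lam b) (apply_op (Xop i N al) v) = concat (map (\<lambda>e. apply_op (lam b) (Xop i N al e)) v)"
    by (induct v) (simp_all add: apply_op_def)
  finally show ?case
    using snoc by (simp add: sum_list_map_concat o_def step_corr[of al N "rev bs" i b, symmetric] split_def del: Fm.simps)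
qed

lemma moment_Fm: "fock_moment (Xop i N al) bs = Fm al N (rev bs) []"
  by (simp add: fock_moment_def corr Omega_def)

lemma Fm_single: "Fm al N [b] gs = (if length gs \<le> N then b * al (length gs) gs else 0)"
proof -
  have "(\<Sum>n\<le>N. if length gs < n then 0
             else if length gs = n then Fm al N [] [] * (b * al n gs)
             else Fm al N [] ((b * (al n (take n gs) * gs ! n)) # drop (Suc n) gs))
      = (\<Sum>n\<le>N. if n = length gs then b * al (length gs) gs else 0)"
    by (rule sum.cong) auto
  then show ?thesis by (simp add: sum.delta)
qed

lemma Fm_left: "Fm al N (rs @ [b]) gs = b * Fm al N (rs @ [1]) gs"
proof (induct rs arbitrary: gs)
  case Nil
  show ?case by (simp add: Fm_single del: Fm.simps)
next
  case (Cons x rs)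
  show ?case
    apply (simp only: append_Cons Fm.simps Cons distrib_left sum_distrib_left)
    apply (rule arg_cong[where f="\<lambda>u. _ + u"])
    apply (rule sum.cong)
     apply (auto simp: mult.assoc)
    done
qed

lemma Fm_local:
  "(\<forall>j < length rs + length gs. al j = be j) \<Longrightarrow> Fm al N rs gs = Fm be N rs gs"
proof (induct rs arbitrary: gs)
  case Nil
  then show ?case by simp
next
  case (Cons b rs)
  have h1: "Fm al N rs (b # gs) = Fm be N rs (b # gs)"
    using Cons by simp
  have h2: "Fm al N rs [] = Fm be N rs []"
    using Cons by simp
  have h3: "Fm al N rs (x # drop (Suc n) gs) = Fm be N rs (x # drop (Suc n) gs)" if "n < length gs" for n x
    using Cons.hyps[of "x # drop (Suc n) gs"] Cons.prems that by simp
  have h4: "al n = be n" if "n \<le> length gs" for n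
    using Cons.prems that by auto
  show ?case
    apply (simp only: Fm.simps h1)
    apply (rule arg_cong[where f="\<lambda>u. _ + u"])
    apply (rule sum.cong)
     apply (auto simp: h2 h3 h4)
    done
qed

lemma Fm_affine:
  "m \<le> N \<Longrightarrow> rs \<noteq> [] \<Longrightarrow> length rs + length gs = Suc m \<Longrightarrow>
   Fm al N rs gs = Fm (al(m := (\<lambda>_. 0))) N rs gs + last rs * al m (rev (butlast rs) @ gs)"
proof (induct rs arbitrary: gs)
  case Nil
  then show ?case by simp
next
  case (Cons b rs)
  show ?case
  proof (cases "rs = []")
    case True
    then show ?thesis using Cons.prems by (simp add: Fm_single del: Fm.simps)
  next
    case False
    let ?be = "al(m := (\<lambda>_. 0))"
    have h1: "Fm al N rs (b # gs) = Fm ?be N rs (b # gs) + last rs * al m (rev (butlast rs) @ b # gs)"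
      by (rule Cons.hyps) (use Cons.prems False in auto)
    have h2: "Fm al N rs [] = Fm ?be N rs []"
      using Cons.prems False by (intro Fm_local) auto
    have h3: "Fm al N rs (x # drop (Suc n) gs) = Fm ?be N rs (x # drop (Suc n) gs)" if "n < length gs" for n x
      using Cons.prems that by (intro Fm_local) auto
    have h4: "al n = ?be n" if "n \<le> length gs" for n
      using Cons.prems that False by auto
    have "(\<Sum>n\<le>N. if length gs < n then 0
             else if length gs = n then Fm al N rs [] * (b * al n gs)
             else Fm al N rs ((b * (al n (take n gs) * gs ! n)) # drop (Suc n) gs)) =
          (\<Sum>n\<le>N. if length gs < n then 0
             else if length gs = n then Fm ?be N rs [] * (b * ?be n gs)
             else Fm ?be N rs ((b * (?be n (take n gs) * gs ! n)) # drop (Suc n) gs))"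
      apply (rule sum.cong)
       apply (auto simp: h2 h3 h4[symmetric] simp del: fun_upd_apply)
      done
    then show ?thesis
      using False by (simp only: Fm.simps h1 last.simps butlast.simps rev.simps if_False) (simp add: algebra_simps)
  qed
qed

definition linf :: "(complex \<Rightarrow> 'b::ring_1) \<Rightarrow> ('b \<Rightarrow> 'b) \<Rightarrow> bool" where
  "linf cs g \<longleftrightarrow> (\<forall>x y. g (x + y) = g x + g y) \<and> (\<forall>c x. g (cs c * x) = cs c * g x)"

definition slotlin :: "(complex \<Rightarrow> 'b::ring_1) \<Rightarrow> nat \<Rightarrow> ('b list \<Rightarrow> 'b) \<Rightarrow> bool" where
  "slotlin cs n f \<longleftrightarrow> (\<forall>zs p. length zs = n \<longrightarrow> p < n \<longrightarrow> linf cs (\<lambda>x. f (zs[p := x])))"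

definition bnd :: "nat \<Rightarrow> ('b::real_normed_algebra_1 list \<Rightarrow> 'b) \<Rightarrow> bool" where
  "bnd n f \<longleftrightarrow> (\<exists>K. \<forall>zs. length zs = n \<longrightarrow> norm (f zs) \<le> K * prod_list (map norm zs))"

definition commc :: "(complex \<Rightarrow> 'b::ring_1) \<Rightarrow> bool" where
  "commc cs \<longleftrightarrow> (\<forall>c x. cs c * x = x * cs c)"

lemma linf_id: "linf cs (\<lambda>x. x)" by (simp add: linf_def)
lemma linf_0: "linf cs (\<lambda>x. 0)" by (simp add: linf_def)
lemma linf_add: "linf cs f \<Longrightarrow> linf cs g \<Longrightarrow> linf cs (\<lambda>x. f x + g x)"
  by (simp add: linf_def algebra_simps)
lemma linf_diff: "linf cs f \<Longrightarrow> linf cs g \<Longrightarrow> linf cs (\<lambda>x. f x - g x)"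
  by (simp add: linf_def algebra_simps)
lemma linf_rmul: "linf cs f \<Longrightarrow> linf cs (\<lambda>x. f x * r)"
  by (simp add: linf_def algebra_simps)
lemma linf_lmul: "commc cs \<Longrightarrow> linf cs f \<Longrightarrow> linf cs (\<lambda>x. r * f x)"
  by (simp add: linf_def commc_def algebra_simps)
lemma linf_comp: "linf cs f \<Longrightarrow> linf cs g \<Longrightarrow> linf cs (\<lambda>x. f (g x))"
  by (simp add: linf_def)
lemma linf_if: "linf cs f \<Longrightarrow> linf cs g \<Longrightarrow> linf cs (\<lambda>x. if P then f x else g x)"
  by (cases P) simp_all
lemma linf_sum: "finite S \<Longrightarrow> (\<And>n. n \<in> S \<Longrightarrow> linf cs (f n)) \<Longrightarrow> linf cs (\<lambda>x. \<Sum>n\<in>S. f n x)"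
  by (simp add: linf_def sum.distrib sum_distrib_left)

lemma Fm_lin:
  assumes cc: "commc cs" and al: "\<forall>n\<le>N. slotlin cs n (al n)"
  shows "(\<forall>p < length rs. linf cs (\<lambda>x. Fm al N (rs[p := x]) gs)) \<and>
         (\<forall>p < length gs. linf cs (\<lambda>x. Fm al N rs (gs[p := x])))"
proof (induct rs arbitrary: gs)
  case Nil
  show ?case
    by (auto simp: linf_def)
next
  case (Cons b rs)
  have IH1: "\<And>gs p. p < length rs \<Longrightarrow> linf cs (\<lambda>x. Fm al N (rs[p := x]) gs)"
    using Cons by blast
  have IH2: "\<And>gs p. p < length gs \<Longrightarrow> linf cs (\<lambda>x. Fm al N rs (gs[p := x]))"
    using Cons by blast
  have H: "linf cs (\<lambda>x. Fm al N rs (x # D))" for D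
    using IH2[of 0 "0 # D"] by simp
  have A: "linf cs (\<lambda>x. al n (zs[q := x]))" if "n \<le> N" "length zs = n" "q < n" for n zs q
    using al that by (simp add: slotlin_def)
  have part1: "linf cs (\<lambda>x. Fm al N ((b # rs)[p := x]) gs)" if p: "p < length (b # rs)" for p
  proof (cases p)
    case 0
    show ?thesis
      unfolding 0 list_update_code(2) Fm.simps
      apply (intro linf_add H linf_sum linf_if linf_0 finite_atMost)
      apply (intro linf_lmul[OF cc] linf_rmul linf_id)
      apply (rule linf_comp[OF H])
      apply (intro linf_rmul linf_id)
      done
  next
    case (Suc p')
    with p have p': "p' < length rs" by simp
    show ?thesis
      unfolding Suc list_update_code(3) Fm.simps
      by (intro linf_add IH1[OF p'] linf_sum linf_if linf_0 finite_atMost linf_rmul)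
  qed
  have part2: "linf cs (\<lambda>x. Fm al N (b # rs) (gs[q := x]))" if q: "q < length gs" for q
  proof -
    have first: "linf cs (\<lambda>x. Fm al N rs (b # gs[q := x]))"
      using IH2[of "Suc q" "b # gs"] q by simp
    have tmr: "linf cs (\<lambda>x. if length gs < n then 0
             else if length gs = n then Fm al N rs [] * (b * al n (gs[q := x]))
             else Fm al N rs ((b * (al n (take n (gs[q := x])) * (gs[q := x]) ! n)) # drop (Suc n) (gs[q := x])))"
      if n: "n \<le> N" for n
    proof (cases "length gs < n")
      case True then show ?thesis by (simp add: linf_0)
    next
      case False
      show ?thesis
      proof (cases "length gs = n")
        case True
        then show ?thesis using False q n
          by (simp add: linf_lmul[OF cc] A)
      next
        case ne: False
        with False have nk: "n < length gs" by simp
        consider "q < n" | "q = n" | "n < q" by linarith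
        then show ?thesis
        proof cases
          case 1
          then have "linf cs (\<lambda>x. Fm al N rs ((b * (al n ((take n gs)[q := x]) * gs ! n)) # drop (Suc n) gs))"
            using nk n by (intro linf_comp[OF H] linf_lmul[OF cc] linf_rmul A) auto
          then show ?thesis using 1 ne False by (simp add: take_update_swap)
        next
          case 2
          then have "linf cs (\<lambda>x. Fm al N rs ((b * (al n (take n gs) * x)) # drop (Suc n) gs))"
            by (intro linf_comp[OF H] linf_lmul[OF cc] linf_id)
          then show ?thesis using 2 ne False nk by simp
        next
          case 3
          have "linf cs (\<lambda>x. Fm al N rs (((b * (al n (take n gs) * gs ! n)) # drop (Suc n) gs)[Suc (q - Suc n) := x]))"
            using 3 q by (intro IH2) simp
          then show ?thesis using 3 ne False nk by (simp add: drop_update_swap)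
        qed
      qed
    qed
    show ?thesis
      unfolding Fm.simps length_list_update
      by (intro linf_add first linf_sum tmr finite_atMost) simp
  qed
  show ?case using part1 part2 by blast
qed


abbreviation pn :: "'b::real_normed_vector list \<Rightarrow> real" where
  "pn xs \<equiv> prod_list (map norm xs)"

lemma pn_nonneg: "0 \<le> pn xs"
  by (rule prod_list_nonneg) auto

lemma pn_split: "n < length gs \<Longrightarrow> pn (take n gs) * norm (gs ! n) * pn (drop (Suc n) gs) = pn gs"
proof -
  assume "n < length gs"
  then have "gs = take n gs @ gs ! n # drop (Suc n) gs" by (rule id_take_nth_drop)
  then have "pn gs = pn (take n gs @ gs ! n # drop (Suc n) gs)" by simp
  then show ?thesis by (simp add: mult.assoc)
qed

lemma Fm_bnd:
  fixes al :: "nat \<Rightarrow> 'b::real_normed_algebra_1 list \<Rightarrow> 'b"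
  assumes al: "\<forall>n\<le>N. bnd n (al n)"
  shows "\<forall>k. \<exists>K\<ge>0. \<forall>rs gs. length rs = r \<longrightarrow> length gs = k \<longrightarrow>
            norm (Fm al N rs gs) \<le> K * (pn rs * pn gs)"
proof -
  have "\<forall>n. \<exists>K. n \<le> N \<longrightarrow> (K \<ge> 0 \<and> (\<forall>zs. length zs = n \<longrightarrow> norm (al n zs) \<le> K * pn zs))"
  proof
    fix n
    show "\<exists>K. n \<le> N \<longrightarrow> (K \<ge> 0 \<and> (\<forall>zs. length zs = n \<longrightarrow> norm (al n zs) \<le> K * pn zs))"
    proof (cases "n \<le> N")
      case True
      then obtain K where K: "\<forall>zs. length zs = n \<longrightarrow> norm (al n zs) \<le> K * pn zs"
        using al by (auto simp: bnd_def)
      have "\<forall>zs. length zs = n \<longrightarrow> norm (al n zs) \<le> \<bar>K\<bar> * pn zs"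
      proof (intro allI impI)
        fix zs :: "'b list" assume "length zs = n"
        then have "norm (al n zs) \<le> K * pn zs" using K by blast
        also have "\<dots> \<le> \<bar>K\<bar> * pn zs" by (intro mult_right_mono pn_nonneg) simp
        finally show "norm (al n zs) \<le> \<bar>K\<bar> * pn zs" .
      qed
      then show ?thesis by (intro exI[of _ "\<bar>K\<bar>"]) simp
    qed simp
  qed
  then obtain Ka where Ka: "\<And>n. n \<le> N \<Longrightarrow> Ka n \<ge> 0"
    "\<And>n zs. n \<le> N \<Longrightarrow> length zs = n \<Longrightarrow> norm (al n zs) \<le> Ka n * pn zs"
    by metis
  show ?thesis
  proof (induct r)
    case 0
    show ?case
    proof (intro allI exI[of _ 1] conjI impI)
      fix k and rs gs :: "'b list"
      assume "length rs = 0" "length gs = k"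
      then show "norm (Fm al N rs gs) \<le> 1 * (pn rs * pn gs)"
        by (cases gs) (auto simp: pn_nonneg)
    qed simp
  next
    case (Suc r)
    then obtain Kf where Kf0: "\<And>k. Kf k \<ge> 0" and
      Kf: "\<And>k rs gs. length rs = r \<Longrightarrow> length gs = k \<Longrightarrow> norm (Fm al N rs gs) \<le> Kf k * (pn rs * pn gs)"
      by metis
    show ?case
    proof
      fix k
      define C where "C n = (Kf 0 + Kf (k - n)) * Ka n" for n
      define K where "K = Kf (Suc k) + (\<Sum>n\<le>N. C n)"
      have C0: "n \<le> N \<Longrightarrow> C n \<ge> 0" for n
        using Kf0 Ka(1) by (simp add: C_def)
      have K0: "K \<ge> 0" unfolding K_def using Kf0[of "Suc k"] sum_nonneg[of "{..N}" C] C0 by force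
      have main: "norm (Fm al N (b # rs) gs) \<le> K * (pn (b # rs) * pn gs)"
        if rs: "length rs = r" and gs: "length gs = k" for b rs gs
      proof -
        define Q where "Q = norm b * pn rs * pn gs"
        have Q0: "Q \<ge> 0" unfolding Q_def by (simp add: pn_nonneg)
        define G where "G n = (if length gs < n then 0
             else if length gs = n then Fm al N rs [] * (b * al n gs)
             else Fm al N rs ((b * (al n (take n gs) * gs ! n)) # drop (Suc n) gs))" for n
        have t1: "norm (Fm al N rs (b # gs)) \<le> Kf (Suc k) * Q"
          using Kf[of rs "b # gs" "Suc k"] rs gs by (simp add: Q_def mult_ac)
        have tG: "norm (G n) \<le> C n * Q" if n: "n \<le> N" for n
        proof -
          consider "length gs < n" | "length gs = n" | "n < length gs" by linarith
          then show ?thesis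
          proof cases
            case 1 then show ?thesis by (simp add: G_def Q0 C0 n)
          next
            case 2
            have a1: "norm (Fm al N rs []) \<le> Kf 0 * pn rs"
              using Kf[of rs "[]" 0] rs by simp
            have a2: "norm (al n gs) \<le> Ka n * pn gs" using Ka(2)[OF n] 2 by simp
            have "norm (G n) \<le> norm (Fm al N rs []) * (norm b * norm (al n gs))"
              using 2 unfolding G_def
              by simp (rule order_trans[OF norm_mult_ineq], intro mult_left_mono norm_mult_ineq norm_ge_zero)
            also have "\<dots> \<le> (Kf 0 * pn rs) * (norm b * (Ka n * pn gs))"
              by (intro mult_mono mult_left_mono a1 a2) (auto simp: Kf0 Ka(1)[OF n] pn_nonneg)
            also have "\<dots> = Kf 0 * Ka n * Q" by (simp add: Q_def mult_ac)
            also have "\<dots> \<le> C n * Q" unfolding C_def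
              by (intro mult_right_mono Q0) (auto simp: Kf0 Ka(1)[OF n])
            finally show ?thesis .
          next
          case 3
          define e where "e = b * (al n (take n gs) * gs ! n)"
          define D where "D = drop (Suc n) gs"
          have lenD: "length (e # D) = k - n" using 3 gs by (simp add: D_def)
          have a1: "norm (Fm al N rs (e # D)) \<le> Kf (k - n) * (pn rs * (norm e * pn D))"
            using Kf[OF rs lenD] by simp
          have a2: "norm (al n (take n gs)) \<le> Ka n * pn (take n gs)" using Ka(2)[OF n] 3 by simp
          have a3: "norm e \<le> norm b * (Ka n * pn (take n gs) * norm (gs ! n))"
          proof -
            have "norm e \<le> norm b * (norm (al n (take n gs)) * norm (gs ! n))"
              unfolding e_def
              by (rule order_trans[OF norm_mult_ineq], intro mult_left_mono norm_mult_ineq norm_ge_zero)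
            also have "\<dots> \<le> norm b * (Ka n * pn (take n gs) * norm (gs ! n))"
              by (intro mult_left_mono mult_right_mono a2) (auto simp: Ka(1)[OF n])
            finally show ?thesis .
          qed
          have "norm (G n) \<le> Kf (k - n) * (pn rs * (norm e * pn D))"
            using 3 a1 by (simp add: G_def e_def D_def)
          also have "\<dots> \<le> Kf (k - n) * (pn rs * ((norm b * (Ka n * pn (take n gs) * norm (gs ! n))) * pn D))"
            by (intro mult_left_mono mult_right_mono a3) (auto simp: Kf0 pn_nonneg)
          also have "\<dots> = Kf (k - n) * Ka n * Q"
            using pn_split[OF 3] by (simp add: Q_def D_def mult_ac)
          also have "\<dots> \<le> C n * Q" unfolding C_def
            by (intro mult_right_mono Q0) (auto simp: Kf0 Ka(1)[OF n])
          finally show ?thesis .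
          qed
        qed
        have "norm (Fm al N (b # rs) gs) = norm (Fm al N rs (b # gs) + (\<Sum>n\<le>N. G n))"
          by (simp add: G_def)
        also have "\<dots> \<le> norm (Fm al N rs (b # gs)) + (\<Sum>n\<le>N. norm (G n))"
          by (intro order_trans[OF norm_triangle_ineq] add_left_mono norm_sum)
        also have "\<dots> \<le> Kf (Suc k) * Q + (\<Sum>n\<le>N. C n * Q)"
          by (intro add_mono t1 sum_mono tG) simp
        also have "\<dots> = K * Q" by (simp add: K_def sum_distrib_right distrib_right)
        also have "\<dots> = K * (pn (b # rs) * pn gs)" by (simp add: Q_def mult_ac)
        finally show ?thesis .
      qed
      show "\<exists>K\<ge>0. \<forall>rs gs. length rs = Suc r \<longrightarrow> length gs = k \<longrightarrow>
            norm (Fm al N rs gs) \<le> K * (pn rs * pn gs)"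
      proof (intro exI[of _ K] conjI allI impI K0)
        fix rs gs :: "'b list" assume "length rs = Suc r" "length gs = k"
        then show "norm (Fm al N rs gs) \<le> K * (pn rs * pn gs)"
          using main by (cases rs) auto
      qed
    qed
  qed
qed


lemma bml_from:
  fixes f :: "'b::{real_normed_algebra_1,banach} list \<Rightarrow> 'b"
  assumes "slotlin cs n f" "bnd n f"
  shows "bounded_multilinear_n cs n f"
proof -
  have upd: "(xs @ z # ys)[length xs := w] = xs @ w # ys" for xs ys :: "'b list" and z w
    by (simp add: list_update_append)
  have L: "linf cs (\<lambda>x. f ((xs @ 0 # ys)[length xs := x]))" if "length xs + length ys + 1 = n" for xs ys :: "'b list"
  proof -
    have "length (xs @ 0 # ys) = n" "length xs < n" using that by auto
    then show ?thesis using assms(1) unfolding slotlin_def by blast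
  qed
  show ?thesis
    unfolding bounded_multilinear_n_def
  proof (intro conjI allI impI)
    fix xs ys :: "'b list" and x y :: 'b assume h: "length xs + length ys + 1 = n"
    have "linf cs (\<lambda>x. f ((xs @ 0 # ys)[length xs := x]))" by (rule L) (use h in simp)
    then show "f (xs @ (x + y) # ys) = f (xs @ x # ys) + f (xs @ y # ys)"
      by (simp add: linf_def upd)
  next
    fix xs ys :: "'b list" and c and x :: 'b assume h: "length xs + length ys + 1 = n"
    have "linf cs (\<lambda>x. f ((xs @ 0 # ys)[length xs := x]))" by (rule L) (use h in simp)
    then show "f (xs @ (cs c * x) # ys) = cs c * f (xs @ x # ys)"
      by (simp add: linf_def upd)
  next
    show "\<exists>K. \<forall>xs. length xs = n \<longrightarrow> norm (f xs) \<le> K * (\<Prod>x\<leftarrow>xs. norm x)"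
      using assms(2) by (simp add: bnd_def)
  qed
qed

lemma slotlin_diff: "slotlin cs n f \<Longrightarrow> slotlin cs n g \<Longrightarrow> slotlin cs n (\<lambda>z. f z - g z)"
  by (simp add: slotlin_def linf_diff)

lemma bnd_diff:
  fixes f g :: "'b::real_normed_algebra_1 list \<Rightarrow> 'b"
  assumes "bnd n f" "bnd n g" shows "bnd n (\<lambda>z. f z - g z)"
proof -
  obtain K1 where K1: "\<forall>zs. length zs = n \<longrightarrow> norm (f zs) \<le> K1 * pn zs" using assms(1) by (auto simp: bnd_def)
  obtain K2 where K2: "\<forall>zs. length zs = n \<longrightarrow> norm (g zs) \<le> K2 * pn zs" using assms(2) by (auto simp: bnd_def)
  show ?thesis unfolding bnd_def
  proof (intro exI[of _ "K1 + K2"] allI impI)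
    fix zs :: "'b list" assume "length zs = n"
    have "length zs = n \<Longrightarrow> norm (f zs - g zs) \<le> K1 * pn zs + K2 * pn zs"
    proof -
      assume zs: "length zs = n"
      have "norm (f zs) \<le> K1 * pn zs" using K1 zs by blast
      moreover have "norm (g zs) \<le> K2 * pn zs" using K2 zs by blast
      ultimately show ?thesis using norm_triangle_ineq4[of "f zs" "g zs"] by linarith
    qed
    then show "norm (f zs - g zs) \<le> (K1 + K2) * pn zs" using \<open>length zs = n\<close> by (simp add: distrib_right)
  qed
qed

lemma slotlin_0: "slotlin cs n (\<lambda>_. 0)" by (simp add: slotlin_def linf_0)
lemma bnd_0: "bnd n (\<lambda>_. 0::'b::real_normed_algebra_1)" by (auto simp: bnd_def intro!: exI[of _ 0])

definition Mfun :: "(nat \<Rightarrow> 'b list \<Rightarrow> 'b) \<Rightarrow> nat \<Rightarrow> 'b::ring_1 list \<Rightarrow> 'b" where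
  "Mfun al N bs = Fm al N (rev bs @ [1]) []"

lemma Mfun_slot:
  assumes "commc cs" "\<forall>n\<le>N. slotlin cs n (al n)"
  shows "slotlin cs m (Mfun al N)"
  unfolding slotlin_def
proof (intro allI impI)
  fix zs :: "'a list" and p assume zs: "length zs = m" and p: "p < m"
  have eq: "rev (zs[p := x]) @ [1] = (rev zs @ [1])[m - p - 1 := x]" for x
    using zs p by (simp add: rev_update list_update_append1)
  have "linf cs (\<lambda>x. Fm al N ((rev zs @ [1])[m - p - 1 := x]) [])"
    using Fm_lin[OF assms, of "rev zs @ [1]" "[]"] zs p by simp
  then show "linf cs (\<lambda>x. Mfun al N (zs[p := x]))"
    by (simp add: Mfun_def eq)
qed

lemma prod_list_rev_real: "prod_list (rev xs) = prod_list (xs :: real list)"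
  by (induct xs) (simp_all add: mult_ac)

lemma Mfun_bnd:
  fixes al :: "nat \<Rightarrow> 'b::real_normed_algebra_1 list \<Rightarrow> 'b"
  assumes "\<forall>n\<le>N. bnd n (al n)"
  shows "bnd m (Mfun al N)"
proof -
  obtain K where K: "\<forall>rs gs. length rs = Suc m \<longrightarrow> length gs = 0 \<longrightarrow>
            norm (Fm al N rs gs) \<le> K * (pn rs * pn gs)"
    using Fm_bnd[OF assms, of "Suc m"] by blast
  show ?thesis unfolding bnd_def
  proof (intro exI[of _ K] allI impI)
    fix zs :: "'b list" assume "length zs = m"
    then have "norm (Fm al N (rev zs @ [1]) []) \<le> K * (pn (rev zs @ [1]) * pn [])"
      using K[rule_format, of "rev zs @ [1]" "[]"] by simp
    then show "norm (Mfun al N zs) \<le> K * pn zs"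
      by (simp add: Mfun_def rev_map[symmetric] prod_list_rev_real)
  qed
qed


lemma alg_word_Cons: "alg_word iota a (b # bs) = iota b * a * alg_word iota a bs"
  by (simp add: alg_word_def)

lemma alg_word_Nil: "alg_word iota a [] = 1"
  by (simp add: alg_word_def)

lemma alg_word_append: "alg_word iota a (xs @ ys) = alg_word iota a xs * alg_word iota a ys"
  by (induct xs) (simp_all add: alg_word_Cons alg_word_Nil mult.assoc)

lemma Et_slot:
  fixes iota :: "'b::{real_normed_algebra_1,banach} \<Rightarrow> 'a::{real_normed_algebra_1,banach}"
  assumes B: "banach_ncps cs iota E"
  shows "slotlin cs m (\<lambda>bs. E (a * alg_word iota a bs))"
  unfolding slotlin_def
proof (intro allI impI)
  fix zs :: "'b list" and p assume zs: "length zs = m" and p: "p < m"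
  define L where "L = alg_word iota a (take p zs)"
  define R where "R = alg_word iota a (drop (Suc p) zs)"
  have eq: "a * alg_word iota a (zs[p := x]) = a * (L * (iota x * a * R))" for x
    using zs p by (simp add: upd_conv_take_nth_drop alg_word_append alg_word_Cons L_def R_def)
  have lin: "linear E" using B unfolding banach_ncps_def by (blast intro: bounded_linear.linear)
  have iadd: "iota (x + y) = iota x + iota y" for x y using B unfolding banach_ncps_def by blast
  have imul: "iota (x * y) = iota x * iota y" for x y using B unfolding banach_ncps_def by blast
  have comm: "iota (cs c) * y = y * iota (cs c)" for c y
    using B unfolding banach_ncps_def complex_structure_def comp_def by blast
  have bim: "E (iota b1 * y) = b1 * E y" for b1 y
  proof -
    have "E (iota b1 * y * iota 1) = b1 * E y * 1" using B unfolding banach_ncps_def by blast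
    moreover have "iota 1 = 1" using B unfolding banach_ncps_def by blast
    ultimately show ?thesis by simp
  qed
  have hom: "a * (L * (iota (cs c) * X)) = iota (cs c) * (a * (L * X))" for c X
  proof -
    have "a * (L * (iota (cs c) * X)) = a * (L * iota (cs c)) * X" by (simp only: mult.assoc)
    also have "\<dots> = a * (iota (cs c) * L) * X" by (simp only: comm[of c L])
    also have "\<dots> = (a * iota (cs c)) * (L * X)" by (simp only: mult.assoc)
    also have "\<dots> = (iota (cs c) * a) * (L * X)" by (simp only: comm[of c a])
    also have "\<dots> = iota (cs c) * (a * (L * X))" by (simp only: mult.assoc)
    finally show ?thesis .
  qed
  show "linf cs (\<lambda>x. E (a * alg_word iota a (zs[p := x])))"
    unfolding linf_def eq
  proof (intro conjI allI)
    fix x y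
    show "E (a * (L * (iota (x + y) * a * R))) = E (a * (L * (iota x * a * R))) + E (a * (L * (iota y * a * R)))"
    proof -
      have "a * (L * (iota (x + y) * a * R)) = a * (L * (iota x * a * R)) + a * (L * (iota y * a * R))"
        by (simp only: iadd distrib_left distrib_right)
      then show ?thesis by (simp only: linear_add[OF lin])
    qed
  next
    fix c x
    show "E (a * (L * (iota (cs c * x) * a * R))) = cs c * E (a * (L * (iota x * a * R)))"
    proof -
      have "a * (L * (iota (cs c * x) * a * R)) = a * (L * (iota (cs c) * (iota x * a * R)))"
        by (simp only: imul mult.assoc)
      also have "\<dots> = iota (cs c) * (a * (L * (iota x * a * R)))" by (rule hom)
      finally show ?thesis by (simp only: bim)
    qed
  qed
qed

lemma Et_bnd:
  fixes iota :: "'b::{real_normed_algebra_1,banach} \<Rightarrow> 'a::{real_normed_algebra_1,banach}"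
  assumes B: "banach_ncps cs iota E"
  shows "bnd m (\<lambda>bs. E (a * alg_word iota a bs))"
proof -
  obtain KE where KE: "KE > 0" "\<forall>x. norm (E x) \<le> norm x * KE"
    using B bounded_linear.pos_bounded[of E] unfolding banach_ncps_def by blast
  have inorm: "norm (iota x) = norm x" for x using B unfolding banach_ncps_def by blast
  have aw: "norm (alg_word iota a zs) \<le> norm a ^ length zs * pn zs" for zs
  proof (induct zs)
    case Nil then show ?case by (simp add: alg_word_Nil)
  next
    case (Cons z zs)
    have "norm (alg_word iota a (z # zs)) \<le> norm z * norm a * norm (alg_word iota a zs)"
      unfolding alg_word_Cons
      using order_trans[OF norm_mult_ineq[of "iota z * a" "alg_word iota a zs"]
        mult_right_mono[OF norm_mult_ineq[of "iota z" a] norm_ge_zero[of "alg_word iota a zs"]]]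
      by (simp add: inorm)
    also have "\<dots> \<le> norm z * norm a * (norm a ^ length zs * pn zs)"
      by (intro mult_left_mono Cons) simp
    finally show ?case by (simp add: mult_ac)
  qed
  show ?thesis unfolding bnd_def
  proof (intro exI[of _ "KE * norm a ^ Suc m"] allI impI)
    fix zs :: "'b list" assume zs: "length zs = m"
    have "norm (E (a * alg_word iota a zs)) \<le> norm (a * alg_word iota a zs) * KE" using KE by blast
    also have "\<dots> \<le> (norm a * (norm a ^ m * pn zs)) * KE"
      using KE(1) aw[of zs] zs
      by (intro mult_right_mono order_trans[OF norm_mult_ineq] mult_left_mono) auto
    finally show "norm (E (a * alg_word iota a zs)) \<le> KE * norm a ^ Suc m * pn zs"
      by (simp add: mult_ac)
  qed
qed





primrec Aseq :: "('a \<Rightarrow> 'b) \<Rightarrow> ('b \<Rightarrow> 'a) \<Rightarrow> 'a::monoid_mult \<Rightarrow> nat \<Rightarrow> nat \<Rightarrow> nat \<Rightarrow> 'b::ring_1 list \<Rightarrow> 'b" where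
  "Aseq E iota a N 0 = (\<lambda>_ _. 0)"
| "Aseq E iota a N (Suc m) = (Aseq E iota a N m)(Suc m := (\<lambda>bs. E (a * alg_word iota a bs) - Mfun (Aseq E iota a N m) N bs))"

lemma Aseq_hi: "m < j \<Longrightarrow> Aseq E iota a N m j = (\<lambda>_. 0)"
  by (induct m) auto

lemma Aseq_stable: "j \<le> m \<Longrightarrow> m \<le> m' \<Longrightarrow> Aseq E iota a N m' j = Aseq E iota a N m j"
proof (induct m')
  case 0 then show ?case by simp
next
  case (Suc m')
  show ?case
  proof (cases "m \<le> m'")
    case True
    then have "Aseq E iota a N (Suc m') j = Aseq E iota a N m' j" using Suc.prems by simp
    then show ?thesis using Suc True by simp
  next
    case False
    then have "m = Suc m'" using Suc.prems by simp
    then show ?thesis by simp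
  qed
qed

lemma Aseq_ok:
  fixes iota :: "'b::{real_normed_algebra_1,banach} \<Rightarrow> 'a::{real_normed_algebra_1,banach}"
  assumes B: "banach_ncps cs iota E"
  shows "\<forall>j\<le>N. slotlin cs j (Aseq E iota a N m j) \<and> bnd j (Aseq E iota a N m j)"
proof (induct m)
  case 0 then show ?case by (simp add: slotlin_0 bnd_0)
next
  case (Suc m)
  have cc: "commc cs" using B unfolding banach_ncps_def complex_structure_def commc_def by (elim conjE) assumption
  have s: "\<forall>n\<le>N. slotlin cs n (Aseq E iota a N m n)" and b: "\<forall>n\<le>N. bnd n (Aseq E iota a N m n)"
    using Suc by auto
  have new: "slotlin cs j (\<lambda>bs. E (a * alg_word iota a bs) - Mfun (Aseq E iota a N m) N bs) \<and>
             bnd j (\<lambda>bs. E (a * alg_word iota a bs) - Mfun (Aseq E iota a N m) N bs)" for j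
    by (intro conjI slotlin_diff bnd_diff Et_slot[OF B] Et_bnd[OF B] Mfun_slot[OF cc s] Mfun_bnd[OF b])
  show ?case using Suc new by auto
qed

lemma Aseq_val:
  assumes "1 \<le> m" "m \<le> N" "length bs = m"
  shows "Mfun (Aseq E iota a N N) N bs = E (a * alg_word iota a bs)"
proof -
  have "Mfun (Aseq E iota a N N) N bs = Mfun (Aseq E iota a N m) N bs"
    unfolding Mfun_def using assms
    by (intro Fm_local) (auto intro: Aseq_stable)
  also obtain m0 where m0: "m = Suc m0" using assms(1) by (cases m) auto
  have upd: "(Aseq E iota a N m)(m := (\<lambda>_. 0)) = Aseq E iota a N m0"
  proof -
    have "Aseq E iota a N m0 (Suc m0) = (\<lambda>_. 0)" by (rule Aseq_hi) simp
    then show ?thesis using m0 by (auto simp: fun_upd_idem)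
  qed
  have "Mfun (Aseq E iota a N m) N bs = Mfun (Aseq E iota a N m0) N bs + Aseq E iota a N m m bs"
    unfolding Mfun_def using Fm_affine[of m N "rev bs @ [1]" "[]" "Aseq E iota a N m"] assms upd
    by simp
  also have "\<dots> = E (a * alg_word iota a bs)" using m0 by simp
  finally show ?thesis .
qed

theorem mainTheorem15:
  fixes cs :: "complex \<Rightarrow> 'b::{real_normed_algebra_1,banach}"
    and iota :: "'b \<Rightarrow> 'a::{real_normed_algebra_1,banach}"
    and E :: "'a \<Rightarrow> 'b"
    and a :: 'a and N :: nat and i :: 'i
  assumes "banach_ncps cs iota E"
    and "N \<ge> 1"
  shows "\<exists>alpha :: nat \<Rightarrow> 'b list \<Rightarrow> 'b.
           (\<forall>n \<le> N. bounded_multilinear_n cs n (alpha n)) \<and>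
           (\<forall>k \<in> {1..N}. \<forall>bs :: 'b list. length bs = Suc k \<longrightarrow>
              fock_moment (Xop i N alpha :: ('i,'b) fop) bs = E (alg_word iota a bs))"
proof -
  define al where "al = Aseq E iota a N N"
  have B: "banach_ncps cs iota E" by fact
  have bim: "E (iota b1 * y) = b1 * E y" for b1 y
  proof -
    have "E (iota b1 * y * iota 1) = b1 * E y * 1" using B unfolding banach_ncps_def by blast
    moreover have "iota 1 = 1" using B unfolding banach_ncps_def by blast
    ultimately show ?thesis by simp
  qed
  show ?thesis
  proof (intro exI[of _ al] conjI allI impI ballI)
    fix n assume "n \<le> N"
    then show "bounded_multilinear_n cs n (al n)"
      using Aseq_ok[OF B, of N a N] \<open>n \<le> N\<close> unfolding al_def by (intro bml_from) auto
  next
    fix k and bs :: "'b list" assume k: "k \<in> {1..N}" and len: "length bs = Suc k"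
    then obtain b0 cs' where bs: "bs = b0 # cs'" and len': "length cs' = k" by (cases bs) auto
    have "fock_moment (Xop i N al :: ('i,'b) fop) bs = Fm al N (rev cs' @ [b0]) []"
      by (simp add: moment_Fm bs del: Fm.simps)
    also have "\<dots> = b0 * Mfun al N cs'" unfolding Mfun_def by (rule Fm_left)
    also have "\<dots> = b0 * E (a * alg_word iota a cs')"
      using Aseq_val[of k N cs' E iota a] k len' unfolding al_def by simp
    also have "\<dots> = E (alg_word iota a bs)"
      by (simp only: bs alg_word_Cons mult.assoc bim)
    finally show "fock_moment (Xop i N al :: ('i,'b) fop) bs = E (alg_word iota a bs)" .
  qed
qed

end
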